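(* Let $\approx$ be an equivalence relation on $\mathbb W$ satisfying: for all $A,B\in\mathbb W$, $A\approx B$ iff $A\setminus B\approx B\setminus A$. Let $A,B,A',B'\in\mathbb W$ with $B\subseteq A$, $B'\subseteq A'$ and $B\approx B'$. Then $A\setminus B\approx A'\setminus B'$ if and only if $A\approx A'$.
   Context: Let $\mathbb N=\{0,1,2,\dots\}$. $\mathbb{W}$ is the family of finitary point sets: sets $A\subseteq\bigcup_{k\ge1}\mathbb N^k$ of finite tuples of natural numbers such that for every $n\in\mathbb N$ there is $h$ with $A\cap\{0,\dots,n\}^k=\emptyset$ for all $k>h$. *)

theory Defs
  imports Main
begin

text \<open>Finite tuples of naturals of length k \<ge> 1 are represented as nonempty lists.
  The set of tuples in {0..n}^k is the set of lists of length k with all entries \<le> n.\<close>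

definition cube :: "nat \<Rightarrow> nat \<Rightarrow> nat list set" where
  "cube n k = {x. length x = k \<and> set x \<subseteq> {0..n}}"

definition finitary :: "nat list set set" where
  "finitary = {A. (\<forall>x\<in>A. x \<noteq> []) \<and>
                  (\<forall>n. \<exists>h. \<forall>k>h. A \<inter> cube n k = {})}"

end

theory Submission
  imports Defs
begin

lemma fin_sub: assumes "A \<in> finitary" "X \<subseteq> A" shows "X \<in> finitary"
proof -
  have "\<forall>x\<in>X. x \<noteq> []" using assms unfolding finitary_def by auto
  moreover have "\<exists>h. \<forall>k>h. X \<inter> cube n k = {}" for n
  proof -
    have "\<forall>n. \<exists>h. \<forall>k>h. A \<inter> cube n k = {}" using assms(1) unfolding finitary_def by simp
    then obtain h where "\<forall>k>h. A \<inter> cube n k = {}" by blast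
    then have "\<forall>k>h. X \<inter> cube n k = {}" using assms(2) by auto
    then show ?thesis by blast
  qed
  ultimately show ?thesis unfolding finitary_def by auto
qed

lemma fin_un: assumes "A \<in> finitary" "B \<in> finitary" shows "A \<union> B \<in> finitary"
proof -
  have "\<exists>h. \<forall>k>h. (A \<union> B) \<inter> cube n k = {}" for n
  proof -
    have "\<forall>n. \<exists>h. \<forall>k>h. A \<inter> cube n k = {}" using assms(1) unfolding finitary_def by simp
    then obtain h1 where h1: "\<forall>k>h1. A \<inter> cube n k = {}" by blast
    have "\<forall>n. \<exists>h. \<forall>k>h. B \<inter> cube n k = {}" using assms(2) unfolding finitary_def by simp
    then obtain h2 where h2: "\<forall>k>h2. B \<inter> cube n k = {}" by blast
    have "\<forall>k>max h1 h2. (A \<union> B) \<inter> cube n k = {}" using h1 h2 by auto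
    then show ?thesis by blast
  qed
  moreover have "\<forall>x\<in>A \<union> B. x \<noteq> []" using assms unfolding finitary_def by auto
  ultimately show ?thesis unfolding finitary_def by auto
qed

theorem lemma1p6:
  fixes r :: "(nat list set \<times> nat list set) set"
  assumes "equiv finitary r"
    and "\<forall>A\<in>finitary. \<forall>B\<in>finitary. (A, B) \<in> r \<longleftrightarrow> (A - B, B - A) \<in> r"
    and "A \<in> finitary" "B \<in> finitary" "A' \<in> finitary" "B' \<in> finitary"
    and "B \<subseteq> A" "B' \<subseteq> A'" "(B, B') \<in> r"
  shows "(A - B, A' - B') \<in> r \<longleftrightarrow> (A, A') \<in> r"
proof -
  define U where "U = A \<union> A'"
  have U: "U \<in> finitary" unfolding U_def using assms fin_un by blast
  have F: "X \<subseteq> U \<Longrightarrow> X \<in> finitary" for X using fin_sub U by blast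
  have tr: "(X,Y) \<in> r \<Longrightarrow> (Y,Z) \<in> r \<Longrightarrow> (X,Z) \<in> r" for X Y Z
    using assms(1) unfolding equiv_def trans_def by blast
  have sy: "(X,Y) \<in> r \<Longrightarrow> (Y,X) \<in> r" for X Y
    using assms(1) unfolding equiv_def sym_def by blast
  have L: "(X',Y') \<in> r" if "X \<subseteq> U" "Y \<subseteq> U" "X' \<subseteq> U" "Y' \<subseteq> U"
     "X - Y = X' - Y'" "Y - X = Y' - X'" "(X,Y) \<in> r" for X Y X' Y'
  proof -
    have "(X - Y, Y - X) \<in> r" using assms(2) that F by blast
    hence "(X' - Y', Y' - X') \<in> r" using that by simp
    thus ?thesis using assms(2) that F by blast
  qed
  define q where "q = B \<inter> A' - B'"
  define s where "s = B - A'"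
  define t where "t = (A - B) \<inter> B'"
  define v where "v = A - B - A'"
  define w where "w = B' - A"
  define x where "x = A' - B' - A"
  have Bs: "B \<subseteq> U" "B' \<subseteq> U" "A \<subseteq> U" "A' \<subseteq> U" "A - B \<subseteq> U" "A' - B' \<subseteq> U"
    unfolding U_def using assms(7,8) by auto
  have P1: "q \<union> s \<union> v \<subseteq> U" "t \<union> w \<union> v \<subseteq> U" "q \<union> x \<union> w \<subseteq> U"
    unfolding q_def s_def t_def v_def w_def x_def U_def using assms(7,8) by auto
  have e1: "B - B' = (q \<union> s \<union> v) - (t \<union> w \<union> v)" "B' - B = (t \<union> w \<union> v) - (q \<union> s \<union> v)"
    unfolding q_def s_def t_def v_def w_def x_def using assms(7,8) by auto
  have e2: "(A - B) - (A' - B') = (t \<union> w \<union> v) - (q \<union> x \<union> w)" "(A' - B') - (A - B) = (q \<union> x \<union> w) - (t \<union> w \<union> v)"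
    unfolding q_def s_def t_def v_def w_def x_def using assms(7,8) by auto
  have e3: "A - A' = (q \<union> s \<union> v) - (q \<union> x \<union> w)" "A' - A = (q \<union> x \<union> w) - (q \<union> s \<union> v)"
    unfolding q_def s_def t_def v_def w_def x_def using assms(7,8) by auto
  have E: "(q \<union> s \<union> v, t \<union> w \<union> v) \<in> r"
    using L[OF Bs(1,2) P1(1,2) e1 assms(9)] .
  show ?thesis
  proof
    assume C: "(A - B, A' - B') \<in> r"
    have "(t \<union> w \<union> v, q \<union> x \<union> w) \<in> r" using L[OF Bs(5,6) P1(2,3) e2 C] .
    with E have "(q \<union> s \<union> v, q \<union> x \<union> w) \<in> r" by (rule tr)
    then show "(A, A') \<in> r" using L[OF P1(1,3) Bs(3,4) e3[symmetric]] by blast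
  next
    assume C: "(A, A') \<in> r"
    have "(q \<union> s \<union> v, q \<union> x \<union> w) \<in> r" using L[OF Bs(3,4) P1(1,3) e3 C] .
    with sy[OF E] have "(t \<union> w \<union> v, q \<union> x \<union> w) \<in> r" by (rule tr)
    then show "(A - B, A' - B') \<in> r" using L[OF P1(2,3) Bs(5,6) e2[symmetric]] by blast
  qed
qed

end
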